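(* Let $\mathcal{A}=\{A_1,\dots,A_m\}$ be a bimodal collection of pairwise disjoint nonempty subsets of a finite abelian group $G$, with internal difference groups $H_1,\dots,H_m$, and suppose there are at least two indices $i$ with $|A_i|<|H_i|$. Then for any two distinct indices $i\neq j$ with $|A_i|<|H_i|$ and $|A_j|<|H_j|$, $H_i$ is not a subgroup of $H_j$ and $H_j$ is not a subgroup of $H_i$.
   Context: $G$ is written additively. The internal difference group $H_i$ of $A_i$ is the subgroup generated by all $x-y$ with $x,y\in A_i$; one always has $|A_i|\le|H_i|$. A collection $\{A_1,\dots,A_m\}$ of pairwise disjoint subsets of $G$ is bimodal if for every $i$ and every $\delta\in G\setminus\{0\}$, the number $N_i(\delta)$ of pairs $(a,b)$ with $a\in A_i$, $b\in A_j$ for some $j\neq i$, and $a-b=\delta$, satisfies $N_i(\delta)\in\{0,|A_i|\}$. *)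

theory Defs
  imports Main
begin

text \<open>Subgroups of an additively written abelian group (type class idiom; the ambient
  group G is the whole type).\<close>
definition add_subgroup :: "'a::ab_group_add set \<Rightarrow> bool" where
  "add_subgroup S \<longleftrightarrow> 0 \<in> S \<and> (\<forall>x\<in>S. \<forall>y\<in>S. x - y \<in> S)"

definition subgroup_generated :: "'a::ab_group_add set \<Rightarrow> 'a set" where
  "subgroup_generated D = \<Inter>{S. add_subgroup S \<and> D \<subseteq> S}"

definition diff_group :: "'a::ab_group_add set \<Rightarrow> 'a set" where
  "diff_group A = subgroup_generated {x - y | x y. x \<in> A \<and> y \<in> A}"

definition N_count :: "nat \<Rightarrow> (nat \<Rightarrow> 'a::ab_group_add set) \<Rightarrow> nat \<Rightarrow> 'a \<Rightarrow> nat" where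
  "N_count m A i \<delta> = card {(a, b). a \<in> A i \<and> (\<exists>j<m. j \<noteq> i \<and> b \<in> A j) \<and> a - b = \<delta>}"

definition pairwise_disjoint_family :: "nat \<Rightarrow> (nat \<Rightarrow> 'a set) \<Rightarrow> bool" where
  "pairwise_disjoint_family m A \<longleftrightarrow> (\<forall>i<m. \<forall>j<m. i \<noteq> j \<longrightarrow> A i \<inter> A j = {})"

definition bimodal :: "nat \<Rightarrow> (nat \<Rightarrow> 'a::ab_group_add set) \<Rightarrow> bool" where
  "bimodal m A \<longleftrightarrow> pairwise_disjoint_family m A \<and>
     (\<forall>i<m. \<forall>\<delta>. \<delta> \<noteq> 0 \<longrightarrow> N_count m A i \<delta> \<in> {0, card (A i)})"

end

theory Submission
  imports Defs
begin

lemma sg_min: "h \<in> subgroup_generated D \<Longrightarrow> add_subgroup T \<Longrightarrow> D \<subseteq> T \<Longrightarrow> h \<in> T"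
  unfolding subgroup_generated_def by blast

lemma step:
  fixes A :: "nat \<Rightarrow> 'a::{ab_group_add, finite} set"
  assumes bm: "bimodal m A" and i: "i < m"
    and x: "x \<in> {b. \<exists>j<m. j \<noteq> i \<and> b \<in> A j}"
    and a: "a \<in> A i" and a': "a' \<in> A i"
  shows "x + (a - a') \<in> {b. \<exists>j<m. j \<noteq> i \<and> b \<in> A j}"
proof -
  define B where "B = {b. \<exists>j<m. j \<noteq> i \<and> b \<in> A j}"
  define S where "S = {(a, b). a \<in> A i \<and> (\<exists>j<m. j \<noteq> i \<and> b \<in> A j) \<and> a - b = a' - x}"
  have disj: "pairwise_disjoint_family m A" using bm unfolding bimodal_def by blast
  have "a' \<noteq> x" using x a' disj i unfolding pairwise_disjoint_family_def by blast
  hence d0: "a' - x \<noteq> 0" by simp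
  have N: "N_count m A i (a' - x) \<in> {0, card (A i)}" using bm i d0 unfolding bimodal_def by blast
  have "(a', x) \<in> S" using a' x unfolding S_def by auto
  hence "card S \<noteq> 0" using card_0_eq[OF finite[of S]] by blast
  moreover have "N_count m A i (a' - x) = card S" unfolding N_count_def S_def by (rule refl)
  ultimately have cS: "card S = card (A i)" using N by simp
  have inj: "inj_on fst S"
  proof (rule inj_onI)
    fix p q assume "p \<in> S" "q \<in> S" "fst p = fst q"
    moreover obtain p1 p2 q1 q2 where "p = (p1, p2)" "q = (q1, q2)" by fastforce
    ultimately have "p1 = q1" "p1 - p2 = a' - x" "q1 - q2 = a' - x" unfolding S_def by auto
    hence "p2 = q2"
      by (metis add_diff_cancel_left' diff_add_cancel)
    thus "p = q" using \<open>p = (p1, p2)\<close> \<open>q = (q1, q2)\<close> \<open>p1 = q1\<close> by simp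
  qed
  have sub: "fst ` S \<subseteq> A i" unfolding S_def by auto
  have "card (fst ` S) = card (A i)" using card_image[OF inj] cS by simp
  hence "fst ` S = A i" using card_subset_eq[OF finite[of "A i"] sub] by simp
  then obtain b where b: "(a, b) \<in> S" using a by force
  hence "b \<in> B" "a - b = a' - x" unfolding S_def B_def by auto
  moreover have "b = x + (a - a')" using \<open>a - b = a' - x\<close>
    by (metis add_diff_cancel_left' add_diff_eq diff_add_cancel)
  ultimately show ?thesis unfolding B_def by simp
qed

lemma closure:
  fixes A :: "nat \<Rightarrow> 'a::{ab_group_add, finite} set"
  assumes bm: "bimodal m A" and i: "i < m"
    and x: "x \<in> {b. \<exists>j<m. j \<noteq> i \<and> b \<in> A j}"
    and h: "h \<in> diff_group (A i)"
  shows "x + h \<in> {b. \<exists>j<m. j \<noteq> i \<and> b \<in> A j}"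
proof -
  define B where "B = {b. \<exists>j<m. j \<noteq> i \<and> b \<in> A j}"
  define T where "T = {h. \<forall>y. y \<in> B \<longleftrightarrow> y + h \<in> B}"
  have "add_subgroup T" unfolding add_subgroup_def T_def
  proof (intro conjI ballI)
    show "0 \<in> {h. \<forall>y. (y \<in> B) = (y + h \<in> B)}" by simp
  next
    fix u v assume u: "u \<in> {h. \<forall>y. (y \<in> B) = (y + h \<in> B)}" and v: "v \<in> {h. \<forall>y. (y \<in> B) = (y + h \<in> B)}"
    show "u - v \<in> {h. \<forall>y. (y \<in> B) = (y + h \<in> B)}"
    proof (intro CollectI allI)
      fix y
      have "(y + (u - v) \<in> B) = (y + (u - v) + v \<in> B)" using v by blast
      also have "y + (u - v) + v = y + u" by (simp add: algebra_simps)
      finally show "(y \<in> B) = (y + (u - v) \<in> B)" using u by blast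
    qed
  qed
  moreover have "{x - y | x y. x \<in> A i \<and> y \<in> A i} \<subseteq> T"
  proof
    fix d assume "d \<in> {x - y | x y. x \<in> A i \<and> y \<in> A i}"
    then obtain a a' where aa: "a \<in> A i" "a' \<in> A i" "d = a - a'" by blast
    show "d \<in> T" unfolding T_def
    proof (intro CollectI allI iffI)
      fix y assume "y \<in> B" thus "y + d \<in> B" using step[OF bm i _ aa(1,2)] aa(3) B_def by blast
    next
      fix y assume "y + d \<in> B"
      hence "(y + d) + (a' - a) \<in> B" using step[OF bm i _ aa(2,1)] B_def by blast
      thus "y \<in> B" using aa(3) by (simp add: algebra_simps)
    qed
  qed
  ultimately have "h \<in> T" using h sg_min unfolding diff_group_def by blast
  thus ?thesis using x unfolding T_def B_def by blast
qed

lemma main: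
  fixes A :: "nat \<Rightarrow> 'a::{ab_group_add, finite} set"
  assumes bm: "bimodal m A" and ne: "A i \<noteq> {}"
    and i: "i < m" and j: "j < m" and ij: "i \<noteq> j"
    and c: "card (A i) < card (diff_group (A i))"
    and sub: "diff_group (A i) \<subseteq> diff_group (A j)"
  shows False
proof -
  have disj: "pairwise_disjoint_family m A" using bm unfolding bimodal_def by blast
  obtain a where a: "a \<in> A i" using ne by blast
  have "card ((+) a ` diff_group (A i)) = card (diff_group (A i))"
    by (simp add: card_image)
  hence "\<not> (+) a ` diff_group (A i) \<subseteq> A i" using c card_mono[OF finite[of "A i"], of "(+) a ` diff_group (A i)"] by linarith
  then obtain h where h: "h \<in> diff_group (A i)" "a + h \<notin> A i" by blast
  have "a \<in> {b. \<exists>k<m. k \<noteq> j \<and> b \<in> A k}" using a i ij by blast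
  from closure[OF bm j this] h sub have "a + h \<in> {b. \<exists>k<m. k \<noteq> j \<and> b \<in> A k}" by blast
  then obtain k where k: "k < m" "k \<noteq> j" "a + h \<in> A k" by blast
  have "k \<noteq> i" using k h by blast
  hence ah: "a + h \<in> {b. \<exists>k<m. k \<noteq> i \<and> b \<in> A k}" using k by blast
  have "- h \<in> diff_group (A i)"
  proof -
    have "add_subgroup (diff_group (A i))"
      unfolding diff_group_def subgroup_generated_def add_subgroup_def by blast
    thus ?thesis unfolding add_subgroup_def using h(1) by (metis diff_0)
  qed
  from closure[OF bm i ah this] have "a \<in> {b. \<exists>k<m. k \<noteq> i \<and> b \<in> A k}" by simp
  then obtain k' where "k' < m" "k' \<noteq> i" "a \<in> A k'" by blast
  thus False using a disj i unfolding pairwise_disjoint_family_def by blast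
qed

theorem lemma3p3:
  fixes A :: "nat \<Rightarrow> 'a::{ab_group_add, finite} set" and m :: nat
  assumes "bimodal m A"
    and "\<forall>i<m. A i \<noteq> {}"
    and "\<exists>i<m. \<exists>j<m. i \<noteq> j \<and> card (A i) < card (diff_group (A i))
                         \<and> card (A j) < card (diff_group (A j))"
    and "i < m" and "j < m" and "i \<noteq> j"
    and "card (A i) < card (diff_group (A i))"
    and "card (A j) < card (diff_group (A j))"
  shows "\<not> diff_group (A i) \<subseteq> diff_group (A j) \<and> \<not> diff_group (A j) \<subseteq> diff_group (A i)"
proof -
  have "A i \<noteq> {}" "A j \<noteq> {}" using assms(2,4,5) by auto
  thus ?thesis using main[OF assms(1) _ assms(4,5,6,7)] main[OF assms(1) _ assms(5,4) _ assms(8)] assms(6)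
    by blast
qed

end
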